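(* Let $E$ be a regular biordered set satisfying (E1), (E2), (E3) below, let $e,f\in E$ with $f\,\omega\,e'$, and let $h=e\oplus f$. Then: (i) $e\,\omega\,h$ and $f\,\omega\,h$; (ii) if $g\in E$ satisfies $e\,\omega^l\,g$ and $f\,\omega^l\,g$, then $h\,\omega^l\,g$; (iii) if $g\in E$ satisfies $e\,\omega^r\,g$ and $f\,\omega^r\,g$, then $h\,\omega^r\,g$. Moreover, $h$ is the unique element of $E$ satisfying (i)–(iii). Conditions: (E1) there exists $0\in E$ with $0\,\omega\,x$ for every $x\in E$; (E2) there is a map $x\mapsto x'$ on $E$ such that for all $x,y\in E$: $(x')'=x$; $y\,\omega^l\,x$ iff $x'\,\omega^r\,y'$; $y\,\omega^l\,x'$ iff $M(y,x)=\{0\}$; (E3) for all $x,y\in E$, if $y\,\omega\,x'$ then $S(x',y')\cap S(y',x')\ne\emptyset$.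
   Context: A regular biordered set is a partial algebra isomorphic to the set of idempotents $E(S)$ of a regular semigroup $S$ (regular: every $x$ has $y$ with $xyx=x$), where $ef$ (computed in $S$) is defined when $\{ef,fe\}\cap\{e,f\}\ne\emptyset$. In $E$: $\omega^l=\{(e,f): ef=e\}$, $\omega^r=\{(e,f): fe=e\}$, $\omega=\omega^l\cap\omega^r$; $M(e,f)=\{g\in E: g\,\omega^l\,e,\ g\,\omega^r\,f\}$; for $g,h\in M(e,f)$, $g\preceq h$ iff $eg\,\omega^r\,eh$ and $gf\,\omega^l\,hf$; $S(e,f)=\{h\in M(e,f): g\preceq h\text{ for all }g\in M(e,f)\}$. Under (E1)–(E3), for $f\,\omega\,e'$ the set $S(e',f')\cap S(f',e')$ has exactly one element $k$, and $e\oplus f$ is defined to be $k'$. *)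

theory Defs
  imports Main
begin

text \<open>The regular biordered set is realised concretely as the set of idempotents
of a regular semigroup (the carrier is the whole type, of class semigroup_mult).\<close>

definition regular_semigroup :: "'a::semigroup_mult itself \<Rightarrow> bool" where
  "regular_semigroup _ \<longleftrightarrow> (\<forall>x::'a. \<exists>y. x * y * x = x)"

definition Idem :: "'a::semigroup_mult set" where
  "Idem = {e. e * e = e}"

definition omega_l :: "'a::semigroup_mult \<Rightarrow> 'a \<Rightarrow> bool" where
  "omega_l e f \<longleftrightarrow> e * f = e"

definition omega_r :: "'a::semigroup_mult \<Rightarrow> 'a \<Rightarrow> bool" where
  "omega_r e f \<longleftrightarrow> f * e = e"

definition omega :: "'a::semigroup_mult \<Rightarrow> 'a \<Rightarrow> bool" where
  "omega e f \<longleftrightarrow> omega_l e f \<and> omega_r e f"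

definition Mset :: "'a::semigroup_mult \<Rightarrow> 'a \<Rightarrow> 'a set" where
  "Mset e f = {g \<in> Idem. omega_l g e \<and> omega_r g f}"

definition sand_pre :: "'a::semigroup_mult \<Rightarrow> 'a \<Rightarrow> 'a \<Rightarrow> 'a \<Rightarrow> bool" where
  "sand_pre e f g h \<longleftrightarrow> omega_r (e * g) (e * h) \<and> omega_l (g * f) (h * f)"

definition Sset :: "'a::semigroup_mult \<Rightarrow> 'a \<Rightarrow> 'a set" where
  "Sset e f = {h \<in> Mset e f. \<forall>g \<in> Mset e f. sand_pre e f g h}"

text \<open>(E1) with the zero z, (E2) with the map c (written x'), (E3).\<close>
definition E123 :: "'a::semigroup_mult \<Rightarrow> ('a \<Rightarrow> 'a) \<Rightarrow> bool" where
  "E123 z c \<longleftrightarrow>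
     z \<in> Idem \<and> (\<forall>x \<in> Idem. omega z x) \<and>
     (\<forall>x \<in> Idem. c x \<in> Idem) \<and>
     (\<forall>x \<in> Idem. \<forall>y \<in> Idem.
        c (c x) = x \<and>
        (omega_l y x \<longleftrightarrow> omega_r (c x) (c y)) \<and>
        (omega_l y (c x) \<longleftrightarrow> Mset y x = {z})) \<and>
     (\<forall>x \<in> Idem. \<forall>y \<in> Idem. omega y (c x) \<longrightarrow>
        Sset (c x) (c y) \<inter> Sset (c y) (c x) \<noteq> {})"

definition oplus :: "('a::semigroup_mult \<Rightarrow> 'a) \<Rightarrow> 'a \<Rightarrow> 'a \<Rightarrow> 'a" where
  "oplus c e f = c (THE k. k \<in> Sset (c e) (c f) \<inter> Sset (c f) (c e))"

end

theory Submission
  imports Defs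
begin

lemma E_facts:
  assumes "E123 z c"
  shows "\<And>x. x \<in> Idem \<Longrightarrow> c x \<in> Idem"
    and "\<And>x. x \<in> Idem \<Longrightarrow> c (c x) = x"
    and "\<And>x y. x \<in> Idem \<Longrightarrow> y \<in> Idem \<Longrightarrow> y * x = y \<longleftrightarrow> c y * c x = c x"
    and "\<And>x y. x \<in> Idem \<Longrightarrow> y \<in> Idem \<Longrightarrow> x * y = y \<longleftrightarrow> c x * c y = c x"
    and "\<And>x y. x \<in> Idem \<Longrightarrow> y \<in> Idem \<Longrightarrow> omega y (c x) \<Longrightarrow>
        Sset (c x) (c y) \<inter> Sset (c y) (c x) \<noteq> {}"
proof -
  show 1: "\<And>x. x \<in> Idem \<Longrightarrow> c x \<in> Idem" using assms unfolding E123_def by blast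
  show 2: "\<And>x. x \<in> Idem \<Longrightarrow> c (c x) = x" using assms unfolding E123_def by blast
  show 3: "\<And>x y. x \<in> Idem \<Longrightarrow> y \<in> Idem \<Longrightarrow> y * x = y \<longleftrightarrow> c y * c x = c x"
    using assms unfolding E123_def omega_l_def omega_r_def by blast
  show "\<And>x y. x \<in> Idem \<Longrightarrow> y \<in> Idem \<Longrightarrow> x * y = y \<longleftrightarrow> c x * c y = c x"
  proof -
    fix x y :: 'a assume x: "x \<in> Idem" and y: "y \<in> Idem"
    have "c x * c y = c x \<longleftrightarrow> c (c x) * c (c y) = c (c y)"
      using 3[of "c y" "c x"] 1 x y by blast
    then show "x * y = y \<longleftrightarrow> c x * c y = c x" using 2 x y by simp
  qed
  show "\<And>x y. x \<in> Idem \<Longrightarrow> y \<in> Idem \<Longrightarrow> omega y (c x) \<Longrightarrow>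
        Sset (c x) (c y) \<inter> Sset (c y) (c x) \<noteq> {}"
    using assms unfolding E123_def by blast
qed

definition Prop :: "'a::semigroup_mult \<Rightarrow> 'a \<Rightarrow> 'a \<Rightarrow> bool" where
  "Prop e f h \<longleftrightarrow> h \<in> Idem \<and> omega e h \<and> omega f h
    \<and> (\<forall>g \<in> Idem. omega_l e g \<and> omega_l f g \<longrightarrow> omega_l h g)
    \<and> (\<forall>g \<in> Idem. omega_r e g \<and> omega_r f g \<longrightarrow> omega_r h g)"

lemma Prop_unique:
  assumes "e \<in> Idem" "f \<in> Idem" "Prop e f h1" "Prop e f h2"
  shows "h1 = h2"
proof -
  have "h1 * h2 = h1" "h2 * h1 = h1" "h2 * h1 = h2" "h1 * h2 = h2"
    using assms unfolding Prop_def omega_def omega_l_def omega_r_def by blast+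
  then show ?thesis by simp
qed

lemma key:
  assumes E: "E123 z c" and e: "e \<in> Idem" and f: "f \<in> Idem"
    and k1: "k \<in> Sset (c e) (c f)" and k2: "k \<in> Sset (c f) (c e)"
  shows "Prop e f (c k)"
proof -
  note F = E_facts[OF E]
  have kI: "k \<in> Idem" using k1 unfolding Sset_def Mset_def by blast
  have ke: "k * c e = k" and fk: "c f * k = k"
    using k1 unfolding Sset_def Mset_def omega_l_def omega_r_def by auto
  have kf: "k * c f = k" and ek: "c e * k = k"
    using k2 unfolding Sset_def Mset_def omega_l_def omega_r_def by auto
  have ceI: "c e \<in> Idem" and cfI: "c f \<in> Idem" using F(1) e f by auto
  have ckI: "c k \<in> Idem" using F(1) kI by auto
  have o1: "c k * e = e" using F(3)[OF ceI kI] ke F(2)[OF e] by simp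
  have o2: "e * c k = e" using F(4)[OF ceI kI] ek F(2)[OF e] by simp
  have o3: "c k * f = f" using F(3)[OF cfI kI] kf F(2)[OF f] by simp
  have o4: "f * c k = f" using F(4)[OF cfI kI] fk F(2)[OF f] by simp
  have L: "omega_l (c k) g" if g: "g \<in> Idem" and a: "omega_l e g" "omega_l f g" for g
  proof -
    have gI: "c g \<in> Idem" using F(1) g by auto
    have eg: "c e * c g = c g" using F(3)[OF g e] a unfolding omega_l_def by simp
    have fg: "c f * c g = c g" using F(3)[OF g f] a unfolding omega_l_def by simp
    have gg: "c g * c g = c g" using gI unfolding Idem_def by simp
    define m where "m = c g * c e"
    have eg2: "c e * (c g * x) = c g * x" for x using eg by (metis mult.assoc)
    have mI: "m \<in> Idem" unfolding m_def Idem_def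
      by (simp add: mult.assoc eg2 gg mult.assoc[symmetric, of "c g" "c g"])
    have mM: "m \<in> Mset (c e) (c f)"
    proof -
      have "c g * c e * c e = c g * c e" using ceI by (simp add: Idem_def mult.assoc)
      moreover have "c f * (c g * c e) = c g * c e" by (simp add: mult.assoc[symmetric] fg)
      ultimately show ?thesis using mI unfolding Mset_def omega_l_def omega_r_def m_def by simp
    qed
    have "omega_r (c e * m) (c e * k)" using k1 mM unfolding Sset_def sand_pre_def by blast
    hence "k * (c e * m) = c e * m" using ek unfolding omega_r_def by simp
    moreover have "c e * m = m" unfolding m_def by (simp add: mult.assoc[symmetric] eg)
    ultimately have "k * m = m" by simp
    hence "k * c g * c e * c g = c g * c e * c g" unfolding m_def by (simp add: mult.assoc)
    hence "k * c g * (c e * c g) = c g * (c e * c g)" by (simp add: mult.assoc)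
    hence "k * c g * c g = c g * c g" by (simp add: eg)
    hence "k * c g = c g" by (simp add: mult.assoc gg)
    thus ?thesis unfolding omega_l_def using F(3)[OF g ckI] F(2)[OF kI] by simp
  qed
  have R: "omega_r (c k) g" if g: "g \<in> Idem" and a: "omega_r e g" "omega_r f g" for g
  proof -
    have gI: "c g \<in> Idem" using F(1) g by auto
    have eg: "c g * c e = c g" using F(4)[OF g e] a unfolding omega_r_def by simp
    have fg: "c g * c f = c g" using F(4)[OF g f] a unfolding omega_r_def by simp
    have gg: "c g * c g = c g" using gI unfolding Idem_def by simp
    define m where "m = c e * c g"
    have eg2: "c g * (c e * x) = c g * x" for x using eg by (metis mult.assoc)
    have mI: "m \<in> Idem" unfolding m_def Idem_def
      by (simp add: mult.assoc eg2 gg)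
    have mM: "m \<in> Mset (c f) (c e)"
    proof -
      have "c e * (c e * c g) = c e * c g" using ceI by (simp add: Idem_def mult.assoc[symmetric])
      moreover have "c e * c g * c f = c e * c g" by (simp add: mult.assoc fg)
      ultimately show ?thesis using mI unfolding Mset_def omega_l_def omega_r_def m_def by simp
    qed
    have "omega_l (m * c e) (k * c e)" using k2 mM unfolding Sset_def sand_pre_def by blast
    hence "(m * c e) * k = m * c e" using ke unfolding omega_l_def by simp
    moreover have "m * c e = m" unfolding m_def by (simp add: mult.assoc eg)
    ultimately have "m * k = m" by simp
    hence "c g * c e * c g * k = c g * c e * c g" unfolding m_def by (simp add: mult.assoc)
    hence "(c g * c e) * c g * k = (c g * c e) * c g" by (simp add: mult.assoc)
    hence "c g * c g * k = c g * c g" by (simp add: eg)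
    hence "c g * k = c g" by (simp add: gg)
    thus ?thesis unfolding omega_r_def using F(4)[OF g ckI] F(2)[OF kI] by simp
  qed
  show ?thesis unfolding Prop_def omega_def omega_l_def omega_r_def
    using ckI o1 o2 o3 o4 L R unfolding omega_l_def omega_r_def by blast
qed

theorem proposition5p3:
  fixes z :: "'a::semigroup_mult" and c :: "'a \<Rightarrow> 'a" and e f :: 'a
  assumes "regular_semigroup TYPE('a)"
    and "E123 z c"
    and "e \<in> Idem" and "f \<in> Idem" and "omega f (c e)"
  defines "h \<equiv> oplus c e f"
  shows "h \<in> Idem \<and> omega e h \<and> omega f h
    \<and> (\<forall>g \<in> Idem. omega_l e g \<and> omega_l f g \<longrightarrow> omega_l h g)
    \<and> (\<forall>g \<in> Idem. omega_r e g \<and> omega_r f g \<longrightarrow> omega_r h g)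
    \<and> (\<forall>h' \<in> Idem. (omega e h' \<and> omega f h'
          \<and> (\<forall>g \<in> Idem. omega_l e g \<and> omega_l f g \<longrightarrow> omega_l h' g)
          \<and> (\<forall>g \<in> Idem. omega_r e g \<and> omega_r f g \<longrightarrow> omega_r h' g))
        \<longrightarrow> h' = h)"
proof -
  note F = E_facts[OF assms(2)]
  obtain k where k: "k \<in> Sset (c e) (c f) \<inter> Sset (c f) (c e)"
    using F(5)[OF assms(3,4,5)] by blast
  have kI: "k \<in> Idem" using k unfolding Sset_def Mset_def by blast
  have uniq: "k2 = k" if "k2 \<in> Sset (c e) (c f) \<inter> Sset (c f) (c e)" for k2
  proof -
    have k2I: "k2 \<in> Idem" using that unfolding Sset_def Mset_def by blast
    have "c k2 = c k" using Prop_unique[OF assms(3,4) key[OF assms(2-4)] key[OF assms(2-4)]] k that by blast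
    hence "c (c k2) = c (c k)" by simp
    thus ?thesis using F(2) kI k2I by simp
  qed
  have "(THE k. k \<in> Sset (c e) (c f) \<inter> Sset (c f) (c e)) = k"
    using k uniq by (rule the_equality)
  hence hk: "h = c k" unfolding h_def oplus_def by simp
  have P: "Prop e f h" unfolding hk using key[OF assms(2-4)] k by blast
  show ?thesis
  proof (intro conjI)
    show "\<forall>h' \<in> Idem. (omega e h' \<and> omega f h'
          \<and> (\<forall>g \<in> Idem. omega_l e g \<and> omega_l f g \<longrightarrow> omega_l h' g)
          \<and> (\<forall>g \<in> Idem. omega_r e g \<and> omega_r f g \<longrightarrow> omega_r h' g))
        \<longrightarrow> h' = h"
      using Prop_unique[OF assms(3,4) _ P] unfolding Prop_def by blast
  qed (use P in \<open>simp_all add: Prop_def\<close>)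
qed

end
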